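(* Let $D$ be any distribution of $(X,A,Y)$ on $\mathcal{X}\times\{0,1\}\times\{0,1\}$ ($\mathcal{X}$ discrete), and let $\tilde D_t$ be obtained by applying the one-step bias process $t$ times, step $i$ with parameters $(\beta_{p,i},\beta_{n,i},\nu_i)$; let $(X,A,\tilde Y_t)$ denote a random point from $\tilde D_t$ and $c_i=\beta_{n,i}/\beta_{p,i}$. Let $\eta(x,a)=\Pr[Y=1\mid X=x,A=a]$ and $\tilde\eta_t(x,a)=\Pr[\tilde Y_t=1\mid X=x,A=a]$. Then $$\tilde\eta_t(x,0)=\frac{\eta(x,0)}{\displaystyle\sum_{i=1}^t\Big(\frac{1-c_i}{1-\nu_i}\prod_{j=i+1}^t\frac{c_j}{1-\nu_j}\Big)\eta(x,0)+\prod_{i=1}^t\frac{c_i}{1-\nu_i}},$$ where $\prod_{j=t+1}^t\frac{c_j}{1-\nu_j}=1$.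
   Context: One-step bias process with parameters $(\beta_p',\beta_n',\nu')$, $\beta_p',\beta_n',\nu'\in(0,1)$, applied to a distribution of $(X,A,Y)$: points with $A=1$ are kept unchanged; points with $A=0,Y=1$ survive independently with probability $\beta_p'$, points with $A=0,Y=0$ survive independently with probability $\beta_n'$; each surviving point with $A=0,Y=1$ keeps label $1$ with probability $1-\nu'$ and is flipped to $0$ with probability $\nu'$; the output is the distribution of surviving points. $\tilde D_t$ results from applying step $i$ to the output of step $i-1$, starting from $D$. *)

theory Defs
  imports "HOL-Probability.Probability"
begin

(* Points are (x, a, y) with a, y :: bool encoding {0,1} (True = 1). *)

definition bias_step :: "real \<Rightarrow> real \<Rightarrow> real \<Rightarrow> ('x \<times> bool \<times> bool) pmf \<Rightarrow> ('x \<times> bool \<times> bool) pmf" where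
  "bias_step bp bn nu D =
     map_pmf the
       (cond_pmf
         (bind_pmf D (\<lambda>(x, a, y).
            if a then return_pmf (Some (x, a, y))
            else if y then
              bind_pmf (bernoulli_pmf bp) (\<lambda>s.
                if s then map_pmf (\<lambda>flip. Some (x, a, \<not> flip)) (bernoulli_pmf nu)
                else return_pmf None)
            else
              map_pmf (\<lambda>s. if s then Some (x, a, y) else None) (bernoulli_pmf bn)))
         {z. z \<noteq> None})"

primrec biased :: "(nat \<Rightarrow> real) \<Rightarrow> (nat \<Rightarrow> real) \<Rightarrow> (nat \<Rightarrow> real) \<Rightarrow> ('x \<times> bool \<times> bool) pmf \<Rightarrow> nat \<Rightarrow> ('x \<times> bool \<times> bool) pmf" where
  "biased bp bn nu D 0 = D"
| "biased bp bn nu D (Suc i) = bias_step (bp (Suc i)) (bn (Suc i)) (nu (Suc i)) (biased bp bn nu D i)"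

(* eta D x a = Pr[Y = 1 | X = x, A = a] under D (0 if the conditioning event is null) *)
definition eta :: "('x \<times> bool \<times> bool) pmf \<Rightarrow> 'x \<Rightarrow> bool \<Rightarrow> real" where
  "eta D x a = measure_pmf.prob D {(x', a', y). x' = x \<and> a' = a \<and> y}
              / measure_pmf.prob D {(x', a', y). x' = x \<and> a' = a}"

end

theory Submission
  imports Defs
begin

definition stepf :: "real \<Rightarrow> real \<Rightarrow> real \<Rightarrow> ('x \<times> bool \<times> bool) \<Rightarrow> ('x \<times> bool \<times> bool) option pmf" where
  "stepf bp bn nu = (\<lambda>(x, a, y).
            if a then return_pmf (Some (x, a, y))
            else if y then
              bind_pmf (bernoulli_pmf bp) (\<lambda>s.
                if s then map_pmf (\<lambda>flip. Some (x, a, \<not> flip)) (bernoulli_pmf nu)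
                else return_pmf None)
            else
              map_pmf (\<lambda>s. if s then Some (x, a, y) else None) (bernoulli_pmf bn))"

lemma stepf_T:
  assumes "0 < bp" "bp < 1" "0 < bn" "bn < 1" "0 < nu" "nu < 1"
  shows "pmf (stepf bp bn nu z) (Some (x, False, True)) = bp * (1 - nu) * indicator {(x, False, True)} z"
  using assms
  by (cases z) (auto simp: stepf_def map_pmf_def pmf_bind indicator_def)

lemma stepf_F:
  assumes "0 < bp" "bp < 1" "0 < bn" "bn < 1" "0 < nu" "nu < 1"
  shows "pmf (stepf bp bn nu z) (Some (x, False, False)) = bp * nu * indicator {(x, False, True)} z + bn * indicator {(x, False, False)} z"
  using assms
  by (cases z) (auto simp: stepf_def map_pmf_def pmf_bind indicator_def)

lemma bind_T:
  assumes "0 < bp" "bp < 1" "0 < bn" "bn < 1" "0 < nu" "nu < 1"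
  shows "pmf (bind_pmf D (stepf bp bn nu)) (Some (x, False, True)) = bp * (1 - nu) * pmf D (x, False, True)"
  by (simp add: pmf_bind stepf_T[OF assms] measure_pmf_single)

lemma bind_F:
  assumes "0 < bp" "bp < 1" "0 < bn" "bn < 1" "0 < nu" "nu < 1"
  shows "pmf (bind_pmf D (stepf bp bn nu)) (Some (x, False, False)) = bp * nu * pmf D (x, False, True) + bn * pmf D (x, False, False)"
  by (simp add: pmf_bind stepf_F[OF assms], subst Bochner_Integration.integral_add) (auto simp: measure_pmf_single less_top[symmetric] intro!: integrable_real_indicator)

lemma nonempty:
  assumes "0 < bp" "bp < 1" "0 < bn" "bn < 1" "0 < nu" "nu < 1"
  shows "set_pmf (bind_pmf D (stepf bp bn nu)) \<inter> {z. z \<noteq> None} \<noteq> {}"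
proof -
  obtain z where z: "z \<in> set_pmf D" using set_pmf_not_empty[of D] by blast
  obtain x a y where zz: "z = (x, a, y)" by (cases z) auto
  have "\<exists>w. Some w \<in> set_pmf (stepf bp bn nu z)"
  proof (cases a)
    case True then show ?thesis unfolding zz stepf_def by auto
  next
    case False
    show ?thesis
    proof (cases y)
      case True
      have "Some (x, False, True) \<in> set_pmf (stepf bp bn nu z)"
        using assms False True unfolding zz stepf_def by (auto intro!: bexI[of _ True] image_eqI[of _ _ False])
      then show ?thesis by blast
    next
      case F: False
      have "Some (x, False, False) \<in> set_pmf (stepf bp bn nu z)"
        using assms False F unfolding zz stepf_def by (auto intro!: image_eqI[of _ _ True])
      then show ?thesis by blast
    qed
  qed
  then show ?thesis using z by auto
qed


lemma map_the_cond:
  assumes ne: "set_pmf N \<inter> {z. z \<noteq> None} \<noteq> {}"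
  shows "pmf (map_pmf the (cond_pmf N {z. z \<noteq> None})) w = pmf N (Some w) / measure N {z. z \<noteq> None}"
proof -
  let ?C = "cond_pmf N {z. z \<noteq> None}"
  have "pmf (map_pmf the ?C) w = measure ?C (the -` {w})" by (rule pmf_map)
  also have "\<dots> = measure ?C (the -` {w} \<inter> set_pmf ?C)" by (simp add: measure_Int_set_pmf)
  also have "the -` {w} \<inter> set_pmf ?C = {Some w} \<inter> set_pmf ?C" using ne by auto
  also have "measure ?C \<dots> = pmf ?C (Some w)" by (simp add: measure_Int_set_pmf measure_pmf_single)
  also have "\<dots> = pmf N (Some w) / measure N {z. z \<noteq> None}" using ne by (simp add: pmf_cond)
  finally show ?thesis .
qed

lemma eta_pmf: "eta D x a = pmf D (x, a, True) / (pmf D (x, a, True) + pmf D (x, a, False))"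
proof -
  have 1: "{(x', a', y). x' = x \<and> a' = a \<and> y} = {(x, a, True)}" by auto
  have 2: "{(x', a', y). x' = x \<and> a' = a} = {(x, a, True), (x, a, False)}" by auto
  show ?thesis unfolding eta_def 1 2 by (simp add: measure_pmf_single measure_measure_pmf_finite)
qed

lemma bias_step_eq: "bias_step bp bn nu D = map_pmf the (cond_pmf (bind_pmf D (stepf bp bn nu)) {z. z \<noteq> None})"
  unfolding bias_step_def stepf_def by simp


lemma g1: "(r::real) > 0 \<Longrightarrow> (a / r) / (a / r + b / r) = a / (a + b)"
  by (simp add: add_divide_distrib[symmetric])
lemma g3: "(s::real) \<noteq> 0 \<Longrightarrow> D \<noteq> 0 \<Longrightarrow> (1 - nu) * (p / s) / (D / (bp * s)) = bp * (1 - nu) * p / D"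
  by (simp add: field_simps)
lemma g2: "(p::real) \<ge> 0 \<Longrightarrow> q \<ge> 0 \<Longrightarrow> bp > 0 \<Longrightarrow> bn > 0 \<Longrightarrow>
  bp * (1 - nu) * p / (bp * p + bn * q) = (1 - nu) * (p / (p + q)) / (p / (p + q) + (bn / bp) * (1 - p / (p + q)))"
proof (cases "p = 0")
  case True
  then show ?thesis by simp
next
  case False
  assume h: "p \<ge> 0" "q \<ge> 0" "bp > 0" "bn > 0"
  then have pq': "p + q \<noteq> 0" "bp \<noteq> 0" using False by auto
  have d: "bp * p + bn * q \<noteq> 0" using h False by (smt (verit) mult_nonneg_nonneg mult_pos_pos)
  have "1 - p / (p + q) = q / (p + q)" using pq' by (simp add: field_simps)
  then have X: "p / (p + q) + (bn / bp) * (1 - p / (p + q)) = (bp * p + bn * q) / (bp * (p + q))"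
    using pq' by (simp add: divide_simps)
  show ?thesis unfolding X by (rule g3[OF pq'(1) d, symmetric])
qed

lemma step_eta:
  assumes "0 < bp" "bp < 1" "0 < bn" "bn < 1" "0 < nu" "nu < 1"
  shows "eta (bias_step bp bn nu D) x False = (1 - nu) * eta D x False / (eta D x False + (bn / bp) * (1 - eta D x False))"
proof -
  let ?N = "bind_pmf D (stepf bp bn nu)"
  define r where "r = measure ?N {z. z \<noteq> None}"
  define p where "p = pmf D (x, False, True)"
  define q where "q = pmf D (x, False, False)"
  have ne: "set_pmf ?N \<inter> {z. z \<noteq> None} \<noteq> {}" by (rule nonempty[OF assms])
  have rpos: "r > 0" proof -
    from ne obtain z where "z \<in> set_pmf ?N" "z \<in> {z. z \<noteq> None}" by blast
    then show ?thesis unfolding r_def by (rule measure_pmf_posI)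
  qed
  have p0: "p \<ge> 0" "q \<ge> 0" unfolding p_def q_def by auto
  have L: "eta (bias_step bp bn nu D) x False = (bp * (1 - nu) * p / r) / (bp * (1 - nu) * p / r + (bp * nu * p + bn * q) / r)"
    unfolding eta_pmf bias_step_eq map_the_cond[OF ne] bind_T[OF assms] bind_F[OF assms] r_def p_def q_def ..
  also have "\<dots> = bp * (1 - nu) * p / (bp * (1 - nu) * p + (bp * nu * p + bn * q))"
    by (rule g1[OF rpos])
  also have "bp * (1 - nu) * p + (bp * nu * p + bn * q) = bp * p + bn * q"
    by (simp add: algebra_simps)
  also have "bp * (1 - nu) * p / (bp * p + bn * q) = (1 - nu) * (p / (p + q)) / (p / (p + q) + (bn / bp) * (1 - p / (p + q)))"
    by (rule g2[OF p0 assms(1) assms(3)])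
  finally show ?thesis unfolding eta_pmf p_def q_def .
qed

lemma eta_bounds: "0 \<le> eta D x a" "eta D x a \<le> 1"
proof -
  have "0 \<le> pmf D (x,a,True)" "0 \<le> pmf D (x,a,False)" "\<not> (pmf D (x,a,True) + pmf D (x,a,False) < 0)" by (auto simp: not_less)
  then show "0 \<le> eta D x a" "eta D x a \<le> 1" unfolding eta_pmf
    by (simp_all add: divide_simps)
qed

lemma newE_gen: "(w::real) \<noteq> 0 \<Longrightarrow> ((1 - c) / w + c / w * S) * e + c / w * P = ((1 - c) * e + c * (S*e+P)) / w"
  by (simp add: field_simps)

lemma den_gen: "(E::real) > 0 \<Longrightarrow> e / E + c * (1 - e / E) = ((1 - c) * e + c * E) / E"
  by (simp add: field_simps)

lemma fin_gen: "K > 0 \<Longrightarrow> (E::real) > 0 \<Longrightarrow> w > 0 \<Longrightarrow> w * (e/E) / (K / E) * (K / w) = e"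
  by (simp add: field_simps)

lemma main_induct:
  fixes D :: "('x \<times> bool \<times> bool) pmf" and bp bn nu :: "nat \<Rightarrow> real" and t :: nat and x :: 'x
  assumes "\<forall>i\<in>{1..t}. 0 < bp i \<and> bp i < 1 \<and> 0 < bn i \<and> bn i < 1 \<and> 0 < nu i \<and> nu i < 1"
  shows "eta (biased bp bn nu D t) x False *
      ((\<Sum>i=1..t. ((1 - bn i / bp i) / (1 - nu i)) * (\<Prod>j=i+1..t. (bn j / bp j) / (1 - nu j))) * eta D x False
       + (\<Prod>i=1..t. (bn i / bp i) / (1 - nu i))) = eta D x False
   \<and> ((\<Sum>i=1..t. ((1 - bn i / bp i) / (1 - nu i)) * (\<Prod>j=i+1..t. (bn j / bp j) / (1 - nu j))) * eta D x False
       + (\<Prod>i=1..t. (bn i / bp i) / (1 - nu i))) > 0"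
  using assms
proof (induction t)
  case 0
  then show ?case by simp
next
  case (Suc t)
  define e where "e = eta D x False"
  define S where "S = (\<Sum>i=1..t. ((1 - bn i / bp i) / (1 - nu i)) * (\<Prod>j=i+1..t. (bn j / bp j) / (1 - nu j)))"
  define P where "P = (\<Prod>i=1..t. (bn i / bp i) / (1 - nu i))"
  define et where "et = eta (biased bp bn nu D t) x False"
  define c where "c = bn (Suc t) / bp (Suc t)"
  define v where "v = nu (Suc t)"
  have IH: "et * (S * e + P) = e" "S * e + P > 0"
    using Suc unfolding et_def S_def P_def e_def by auto
  have par: "0 < bp (Suc t)" "bp (Suc t) < 1" "0 < bn (Suc t)" "bn (Suc t) < 1" "0 < nu (Suc t)" "nu (Suc t) < 1"
    using Suc.prems by auto
  have c0: "c > 0" unfolding c_def using par by simp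
  have v1: "v < 1" "0 < v" unfolding v_def using par by auto
  have ebd: "0 \<le> e" "e \<le> 1" "0 \<le> et" "et \<le> 1" unfolding e_def et_def by (rule eta_bounds)+
  have step: "eta (biased bp bn nu D (Suc t)) x False = (1 - v) * et / (et + c * (1 - et))"
    unfolding et_def c_def v_def using step_eta[OF par] by simp
  have Sx: "(\<Sum>i=1..Suc t. ((1 - bn i / bp i) / (1 - nu i)) * (\<Prod>j=i+1..Suc t. (bn j / bp j) / (1 - nu j)))
      = (1 - c) / (1 - v) + c / (1 - v) * S"
  proof -
    have "(\<Sum>i=1..Suc t. ((1 - bn i / bp i) / (1 - nu i)) * (\<Prod>j=i+1..Suc t. (bn j / bp j) / (1 - nu j)))
       = (\<Sum>i=1..t. ((1 - bn i / bp i) / (1 - nu i)) * (\<Prod>j=i+1..Suc t. (bn j / bp j) / (1 - nu j)))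
         + (1 - c) / (1 - v)"
    proof -
      have E1: "(\<Prod>j=1 + Suc t..Suc t. (bn j / bp j) / (1 - nu j)) = 1" by simp
      show ?thesis by (subst sum.nat_ivl_Suc') (simp, simp only: E1 mult_1_right add.commute c_def v_def)
    qed
    also have "(\<Sum>i=1..t. ((1 - bn i / bp i) / (1 - nu i)) * (\<Prod>j=i+1..Suc t. (bn j / bp j) / (1 - nu j)))
       = (\<Sum>i=1..t. ((1 - bn i / bp i) / (1 - nu i)) * (\<Prod>j=i+1..t. (bn j / bp j) / (1 - nu j)) * (c / (1 - v)))"
    proof (rule sum.cong)
      fix i assume "i \<in> {1..t}"
      then have "(\<Prod>j=i+1..Suc t. (bn j / bp j) / (1 - nu j)) = (\<Prod>j=i+1..t. (bn j / bp j) / (1 - nu j)) * (c / (1 - v))"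
        by (subst prod.nat_ivl_Suc') (auto simp: mult.commute c_def v_def)
      then show "((1 - bn i / bp i) / (1 - nu i)) * (\<Prod>j=i+1..Suc t. (bn j / bp j) / (1 - nu j))
         = ((1 - bn i / bp i) / (1 - nu i)) * (\<Prod>j=i+1..t. (bn j / bp j) / (1 - nu j)) * (c / (1 - v))"
        by (simp only: mult.assoc)
    qed simp
    also have "\<dots> = c / (1 - v) * S" unfolding S_def by (simp add: sum_distrib_left mult.commute)
    finally show ?thesis by simp
  qed
  have Px: "(\<Prod>i=1..Suc t. (bn i / bp i) / (1 - nu i)) = c / (1 - v) * P"
    unfolding P_def c_def v_def by (simp add: prod.nat_ivl_Suc')
  define E where "E = S * e + P"
  have E0: "E > 0" using IH unfolding E_def by simp
  have etE1: "et * E = e" using IH unfolding E_def by simp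
  have etE: "et = e / E" using etE1 E0 by (simp add: eq_divide_eq)
  have eE: "e \<le> E" using etE1 E0 ebd mult_right_mono[of et 1 E] by simp
  have K: "(1 - c) * e + c * E > 0"
  proof (cases "e = 0")
    case True then show ?thesis using c0 E0 by simp
  next
    case False
    have "(1 - c) * e + c * E = e + c * (E - e)" by (simp add: algebra_simps)
    moreover have "c * (E - e) \<ge> 0" using c0 eE by simp
    ultimately show ?thesis using False ebd by linarith
  qed
  have w0: "1 - v > 0" using v1 by simp
  have newE: "((1 - c) / (1 - v) + c / (1 - v) * S) * e + c / (1 - v) * P = ((1 - c) * e + c * E) / (1 - v)"
    unfolding E_def by (rule newE_gen) (use w0 in simp)
  have den: "et + c * (1 - et) = ((1 - c) * e + c * E) / E"
    unfolding etE by (rule den_gen[OF E0])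
  show ?case
    unfolding step Sx Px e_def[symmetric] et_def[symmetric] newE den
  proof
    show "(1 - v) * et / (((1 - c) * e + c * E) / E) * (((1 - c) * e + c * E) / (1 - v)) = e"
      unfolding etE by (rule fin_gen[OF K E0 w0])
    show "((1 - c) * e + c * E) / (1 - v) > 0" using K w0 by simp
  qed
qed


lemma div_helper: "(a::real) * E = b \<and> E > 0 \<Longrightarrow> a = b / E"
  by (simp add: eq_divide_eq)

theorem proposition7p1:
  fixes D :: "('x \<times> bool \<times> bool) pmf" and bp bn nu :: "nat \<Rightarrow> real" and t :: nat and x :: 'x
  assumes "\<forall>i\<in>{1..t}. 0 < bp i \<and> bp i < 1 \<and> 0 < bn i \<and> bn i < 1 \<and> 0 < nu i \<and> nu i < 1"
  shows "eta (biased bp bn nu D t) x False =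
    eta D x False /
      ((\<Sum>i=1..t. ((1 - bn i / bp i) / (1 - nu i)) * (\<Prod>j=i+1..t. (bn j / bp j) / (1 - nu j))) * eta D x False
       + (\<Prod>i=1..t. (bn i / bp i) / (1 - nu i)))"
  by (rule div_helper[OF main_induct[OF assms]])

end
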